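(* Let $R$ be a left noetherian domain and let $A=\sigma(R)\langle x_1,\dots,x_n\rangle$ be a bijective skew PBW extension of $R$. (i) The algebraic subsets of $R^n$ are the closed sets of a topology on $R^n$ (the Zariski topology); that is, $\emptyset$ and $R^n$ are algebraic, the union of two algebraic sets is algebraic, and the intersection of any family of algebraic sets is algebraic. (ii) Every finite subset $X\subseteq R^n$ is algebraic, hence closed in this topology.
   Context: Skew PBW extension: a ring $A$ is a skew PBW extension of a ring $R$, written $A=\sigma(R)\langle x_1,\dots,x_n\rangle$, if (1) $R\subseteq A$ is a subring; (2) there are $x_1,\dots,x_n\in A$ such that $A$ is a free left $R$-module with basis $\mathrm{Mon}(A)=\{x^\alpha=x_1^{\alpha_1}\cdots x_n^{\alpha_n}:\alpha\in\mathbb N^n\}$; (3) for every $i$ and every $r\in R\setminus\{0\}$ there is $c_{i,r}\in R\setminus\{0\}$ with $x_ir-c_{i,r}x_i\in R$; (4) for every $i,j$ there is $c_{i,j}\in R\setminus\{0\}$ with $x_jx_i-c_{i,j}x_ix_j\in R+Rx_1+\cdots+Rx_n$. For each $i$ there are then an injective ring endomorphism $\sigma_i$ of $R$ and a $\sigma_i$-derivation $\delta_i$ of $R$ with $x_ir=\sigma_i(r)x_i+\delta_i(r)$ for all $r\in R$. $A$ is bijective if every $\sigma_i$ is bijective and every $c_{i,j}$ is invertible. Under these hypotheses $A$ is a left noetherian domain. Roots and vanishing sets: for $Z=(z_1,\dots,z_n)\in R^n$, $\langle Z\rangle$ denotes the two-sided ideal of $A$ generated by $x_1-z_1,\dots,x_n-z_n$.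 $Z$ is a root of $f\in A$, written $f(Z)=0$, iff $f\in\langle Z\rangle$. For $f\in A$, $V(f)=\{Z\in R^n: f(Z)=0\}$. Algebraic sets: a subset $X\subseteq R^n$ is algebraic if either $X=R^n$ or there exists $0\neq g\in A$ with $X\subseteq V(g)$. *)

theory Defs
  imports "HOL-Algebra.Algebra"
begin

text \<open>Variables are indexed x 0, ..., x (n-1) (instead of x_1..x_n).
  Exponent vectors alpha in N^n are functions nat => nat vanishing outside {0..<n}.\<close>

definition exps :: "nat \<Rightarrow> (nat \<Rightarrow> nat) set" where
  "exps n = {\<alpha>. \<forall>i\<ge>n. \<alpha> i = 0}"

definition mon :: "('a, 'b) ring_scheme \<Rightarrow> (nat \<Rightarrow> 'a) \<Rightarrow> nat \<Rightarrow> (nat \<Rightarrow> nat) \<Rightarrow> 'a" where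
  "mon A x n \<alpha> = foldr (\<lambda>i acc. (x i [^]\<^bsub>A\<^esub> (\<alpha> i)) \<otimes>\<^bsub>A\<^esub> acc) [0..<n] \<one>\<^bsub>A\<^esub>"

definition free_left_basis ::
  "('a, 'b) ring_scheme \<Rightarrow> 'a set \<Rightarrow> (nat \<Rightarrow> 'a) \<Rightarrow> nat \<Rightarrow> bool" where
  "free_left_basis A R x n \<longleftrightarrow>
     (\<forall>a \<in> carrier A. \<exists>!c :: (nat \<Rightarrow> nat) \<Rightarrow> 'a.
        (\<forall>\<alpha>. c \<alpha> \<in> R) \<and> (\<forall>\<alpha>. \<alpha> \<notin> exps n \<longrightarrow> c \<alpha> = \<zero>\<^bsub>A\<^esub>) \<and>
        finite {\<alpha>. c \<alpha> \<noteq> \<zero>\<^bsub>A\<^esub>} \<and>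
        a = finsum A (\<lambda>\<alpha>. c \<alpha> \<otimes>\<^bsub>A\<^esub> mon A x n \<alpha>) {\<alpha>. c \<alpha> \<noteq> \<zero>\<^bsub>A\<^esub>})"

definition lin_span :: "('a, 'b) ring_scheme \<Rightarrow> 'a set \<Rightarrow> (nat \<Rightarrow> 'a) \<Rightarrow> nat \<Rightarrow> 'a \<Rightarrow> bool" where
  "lin_span A R x n y \<longleftrightarrow>
     (\<exists>d0 \<in> R. \<exists>d. (\<forall>k<n. d k \<in> R) \<and>
        y = d0 \<oplus>\<^bsub>A\<^esub> finsum A (\<lambda>k. d k \<otimes>\<^bsub>A\<^esub> x k) {..<n})"

definition skew_PBW :: "('a, 'b) ring_scheme \<Rightarrow> 'a set \<Rightarrow> (nat \<Rightarrow> 'a) \<Rightarrow> nat \<Rightarrow> bool" where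
  "skew_PBW A R x n \<longleftrightarrow>
     ring A \<and> subring R A \<and>
     (\<forall>i<n. x i \<in> carrier A) \<and>
     free_left_basis A R x n \<and>
     (\<forall>i<n. \<forall>r \<in> R - {\<zero>\<^bsub>A\<^esub>}. \<exists>c \<in> R - {\<zero>\<^bsub>A\<^esub>}.
        x i \<otimes>\<^bsub>A\<^esub> r \<ominus>\<^bsub>A\<^esub> c \<otimes>\<^bsub>A\<^esub> x i \<in> R) \<and>
     (\<forall>i<n. \<forall>j<n. \<exists>c \<in> R - {\<zero>\<^bsub>A\<^esub>}.
        lin_span A R x n (x j \<otimes>\<^bsub>A\<^esub> x i \<ominus>\<^bsub>A\<^esub> c \<otimes>\<^bsub>A\<^esub> x i \<otimes>\<^bsub>A\<^esub> x j))"

text \<open>The endomorphism sigma_i: x_i r = sigma_i(r) x_i + delta_i(r), delta_i(r) in R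
  (sigma_i(r) is uniquely determined by freeness of the basis).\<close>
definition pbw_sigma :: "('a, 'b) ring_scheme \<Rightarrow> 'a set \<Rightarrow> (nat \<Rightarrow> 'a) \<Rightarrow> nat \<Rightarrow> 'a \<Rightarrow> 'a" where
  "pbw_sigma A R x i r = (THE c. c \<in> R \<and> x i \<otimes>\<^bsub>A\<^esub> r \<ominus>\<^bsub>A\<^esub> c \<otimes>\<^bsub>A\<^esub> x i \<in> R)"

definition bijective_skew_PBW :: "('a, 'b) ring_scheme \<Rightarrow> 'a set \<Rightarrow> (nat \<Rightarrow> 'a) \<Rightarrow> nat \<Rightarrow> bool" where
  "bijective_skew_PBW A R x n \<longleftrightarrow>
     skew_PBW A R x n \<and>
     (\<forall>i<n. bij_betw (pbw_sigma A R x i) R R) \<and>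
     (\<forall>i<n. \<forall>j<n. \<forall>c \<in> R - {\<zero>\<^bsub>A\<^esub>}.
        lin_span A R x n (x j \<otimes>\<^bsub>A\<^esub> x i \<ominus>\<^bsub>A\<^esub> c \<otimes>\<^bsub>A\<^esub> x i \<otimes>\<^bsub>A\<^esub> x j) \<longrightarrow>
        (\<exists>d \<in> R. c \<otimes>\<^bsub>A\<^esub> d = \<one>\<^bsub>A\<^esub> \<and> d \<otimes>\<^bsub>A\<^esub> c = \<one>\<^bsub>A\<^esub>))"

definition subring_domain :: "('a, 'b) ring_scheme \<Rightarrow> 'a set \<Rightarrow> bool" where
  "subring_domain A R \<longleftrightarrow> \<one>\<^bsub>A\<^esub> \<noteq> \<zero>\<^bsub>A\<^esub> \<and>
     (\<forall>a \<in> R. \<forall>b \<in> R. a \<otimes>\<^bsub>A\<^esub> b = \<zero>\<^bsub>A\<^esub> \<longrightarrow> a = \<zero>\<^bsub>A\<^esub> \<or> b = \<zero>\<^bsub>A\<^esub>)"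

definition left_ideal_in :: "('a, 'b) ring_scheme \<Rightarrow> 'a set \<Rightarrow> 'a set \<Rightarrow> bool" where
  "left_ideal_in A R I \<longleftrightarrow> I \<subseteq> R \<and> \<zero>\<^bsub>A\<^esub> \<in> I \<and>
     (\<forall>a \<in> I. \<forall>b \<in> I. a \<oplus>\<^bsub>A\<^esub> b \<in> I) \<and> (\<forall>a \<in> I. \<ominus>\<^bsub>A\<^esub> a \<in> I) \<and>
     (\<forall>r \<in> R. \<forall>a \<in> I. r \<otimes>\<^bsub>A\<^esub> a \<in> I)"

definition left_noetherian_sub :: "('a, 'b) ring_scheme \<Rightarrow> 'a set \<Rightarrow> bool" where
  "left_noetherian_sub A R \<longleftrightarrow>
     (\<forall>I :: nat \<Rightarrow> 'a set. (\<forall>k. left_ideal_in A R (I k)) \<and> (\<forall>k. I k \<subseteq> I (Suc k)) \<longrightarrow>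
        (\<exists>m. \<forall>k\<ge>m. I k = I m))"

definition points :: "'a set \<Rightarrow> nat \<Rightarrow> 'a list set" where
  "points R n = {Z. length Z = n \<and> set Z \<subseteq> R}"

definition point_ideal :: "('a, 'b) ring_scheme \<Rightarrow> (nat \<Rightarrow> 'a) \<Rightarrow> nat \<Rightarrow> 'a list \<Rightarrow> 'a set" where
  "point_ideal A x n Z = genideal A {x i \<ominus>\<^bsub>A\<^esub> Z ! i | i. i < n}"

definition vanishing :: "('a, 'b) ring_scheme \<Rightarrow> 'a set \<Rightarrow> (nat \<Rightarrow> 'a) \<Rightarrow> nat \<Rightarrow> 'a \<Rightarrow> 'a list set" where
  "vanishing A R x n f = {Z \<in> points R n. f \<in> point_ideal A x n Z}"

definition algebraic_set :: "('a, 'b) ring_scheme \<Rightarrow> 'a set \<Rightarrow> (nat \<Rightarrow> 'a) \<Rightarrow> nat \<Rightarrow> 'a list set \<Rightarrow> bool" where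
  "algebraic_set A R x n S \<longleftrightarrow> S \<subseteq> points R n \<and>
     (S = points R n \<or> (\<exists>g \<in> carrier A. g \<noteq> \<zero>\<^bsub>A\<^esub> \<and> S \<subseteq> vanishing A R x n g))"

end

theory Submission
  imports Defs
begin

definition padd :: "(nat \<Rightarrow> nat) \<Rightarrow> (nat \<Rightarrow> nat) \<Rightarrow> nat \<Rightarrow> nat" where
  "padd a b = (\<lambda>i. a i + b i)"
definition ee :: "nat \<Rightarrow> nat \<Rightarrow> nat" where
  "ee j = (\<lambda>i. if i = j then 1 else 0)"
definition deg :: "nat \<Rightarrow> (nat \<Rightarrow> nat) \<Rightarrow> nat" where
  "deg n a = (\<Sum>i<n. a i)"
definition lexl :: "(nat \<Rightarrow> nat) \<Rightarrow> (nat \<Rightarrow> nat) \<Rightarrow> bool" where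
  "lexl a b \<longleftrightarrow> (\<exists>k. (\<forall>i<k. a i = b i) \<and> a k < b k)"
definition lessm :: "nat \<Rightarrow> (nat \<Rightarrow> nat) \<Rightarrow> (nat \<Rightarrow> nat) \<Rightarrow> bool" where
  "lessm n a b \<longleftrightarrow> deg n a < deg n b \<or> (deg n a = deg n b \<and> lexl a b)"

lemma deg_padd: "deg n (padd a b) = deg n a + deg n b"
  by (simp add: deg_def padd_def sum.distrib)
lemma deg_ee: "j < n \<Longrightarrow> deg n (ee j) = 1"
  by (simp add: deg_def ee_def)
lemma padd_exps: "a \<in> exps n \<Longrightarrow> b \<in> exps n \<Longrightarrow> padd a b \<in> exps n"
  by (simp add: exps_def padd_def)
lemma ee_exps: "j < n \<Longrightarrow> ee j \<in> exps n"
  by (simp add: exps_def ee_def)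
lemma padd_comm: "padd a b = padd b a" by (auto simp: padd_def)
lemma padd_assoc: "padd (padd a b) c = padd a (padd b c)" by (auto simp: padd_def)

lemma lexl_irrefl: "\<not> lexl a a" by (auto simp: lexl_def)
lemma lexl_trans: assumes "lexl a b" "lexl b c" shows "lexl a c"
proof -
  obtain k where k: "\<forall>i<k. a i = b i" "a k < b k" using assms(1) lexl_def by blast
  obtain l where l: "\<forall>i<l. b i = c i" "b l < c l" using assms(2) lexl_def by blast
  show ?thesis unfolding lexl_def
  proof (cases "k < l")
    case True then show "\<exists>m. (\<forall>i<m. a i = c i) \<and> a m < c m"
      using k l by (intro exI[of _ k]) auto
  next
    case False then show "\<exists>m. (\<forall>i<m. a i = c i) \<and> a m < c m"
      using k l by (intro exI[of _ l]) (auto simp: less_le)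
  qed
qed
lemma lexl_padd: "lexl a b \<Longrightarrow> lexl (padd a c) (padd b c)"
  by (auto simp: lexl_def padd_def)
lemma lexl_total: assumes "a \<noteq> b" shows "lexl a b \<or> lexl b a"
proof -
  have "\<exists>k. a k \<noteq> b k" using assms by auto
  define k where "k = (LEAST k. a k \<noteq> b k)"
  have "a k \<noteq> b k" unfolding k_def by (rule LeastI_ex) fact
  moreover have "\<forall>i<k. a i = b i" unfolding k_def using not_less_Least by blast
  ultimately show ?thesis unfolding lexl_def
    by (metis linorder_neqE_nat)
qed

lemma lessm_irrefl: "\<not> lessm n a a" by (simp add: lessm_def lexl_irrefl)
lemma lessm_trans: "lessm n a b \<Longrightarrow> lessm n b c \<Longrightarrow> lessm n a c"
  unfolding lessm_def using lexl_trans by auto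
lemma lessm_padd: "lessm n a b \<Longrightarrow> lessm n (padd a c) (padd b c)"
  unfolding lessm_def using lexl_padd by (auto simp: deg_padd)
lemma lessm_padd2: "lessm n a b \<Longrightarrow> lessm n (padd c a) (padd c b)"
  using lessm_padd padd_comm by metis
lemma lessm_total: "a \<noteq> b \<Longrightarrow> lessm n a b \<or> lessm n b a"
  unfolding lessm_def using lexl_total by (metis linorder_neqE_nat)
lemma lessm_deg: "deg n a < deg n b \<Longrightarrow> lessm n a b"
  by (simp add: lessm_def)

lemma max_exists:
  assumes "finite S" "S \<noteq> {}"
  shows "\<exists>m\<in>S. \<forall>s\<in>S. s \<noteq> m \<longrightarrow> lessm n s m"
  using assms
proof (induction S rule: finite_ne_induct)
  case (singleton x) then show ?case by auto
next
  case (insert x F)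
  then obtain m where m: "m \<in> F" "\<forall>s\<in>F. s \<noteq> m \<longrightarrow> lessm n s m" by auto
  show ?case
  proof (cases "lessm n m x")
    case True then show ?thesis using m lessm_trans
      by (metis insert_iff)
  next
    case False
    then have "x \<noteq> m \<longrightarrow> lessm n x m" using lessm_total by blast
    then show ?thesis using m by (intro bexI[of _ m]) auto
  qed
qed

locale pbw = ring A for A (structure) +
  fixes R :: "'a set" and x :: "nat \<Rightarrow> 'a" and n :: nat
  assumes sub: "subring R A"
  and xc: "\<And>i. i < n \<Longrightarrow> x i \<in> carrier A"
  and free: "free_left_basis A R x n"
  and comm_r: "\<And>i r. i < n \<Longrightarrow> r \<in> R \<Longrightarrow> r \<noteq> \<zero> \<Longrightarrow> \<exists>c\<in>R - {\<zero>}. x i \<otimes> r \<ominus> c \<otimes> x i \<in> R"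
  and comm_x: "\<And>i j. i < n \<Longrightarrow> j < n \<Longrightarrow> \<exists>c\<in>R - {\<zero>}. lin_span A R x n (x j \<otimes> x i \<ominus> c \<otimes> x i \<otimes> x j)"
  and dom1: "\<one> \<noteq> \<zero>"
  and dom: "\<And>a b. a \<in> R \<Longrightarrow> b \<in> R \<Longrightarrow> a \<otimes> b = \<zero> \<Longrightarrow> a = \<zero> \<or> b = \<zero>"
begin

lemmas subE = subringE[OF sub]
lemma Rc: "r \<in> R \<Longrightarrow> r \<in> carrier A" using subE(1) by auto
lemma R0: "\<zero> \<in> R" using subE(2) .
lemma R1: "\<one> \<in> R" using subE(3) .
lemma Rm: "a \<in> R \<Longrightarrow> b \<in> R \<Longrightarrow> a \<otimes> b \<in> R" using subE(6) .
lemma Ra: "a \<in> R \<Longrightarrow> b \<in> R \<Longrightarrow> a \<oplus> b \<in> R" using subE(7) .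
lemma Rn: "a \<in> R \<Longrightarrow> \<ominus> a \<in> R" using subE(5) .

definition monf :: "nat \<Rightarrow> (nat \<Rightarrow> nat) \<Rightarrow> 'a" where
  "monf k a = foldr (\<lambda>i acc. x i [^] a i \<otimes> acc) [k..<n] \<one>"

lemma mon_monf: "mon A x n a = monf 0 a"
  by (simp add: mon_def monf_def)

lemma foldr_closed: fixes a :: "nat \<Rightarrow> nat" shows "set l \<subseteq> {..<n} \<Longrightarrow> foldr (\<lambda>i acc. x i [^] a i \<otimes> acc) l \<one> \<in> carrier A"
  by (induction l) (auto intro!: m_closed simp: xc)

lemma monf_closed[simp]: "monf k a \<in> carrier A"
  unfolding monf_def by (rule foldr_closed) auto

lemma mon_closed[simp]: "mon A x n a \<in> carrier A"
  by (simp add: mon_monf)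

lemma monf_step: "k < n \<Longrightarrow> monf k a = x k [^] a k \<otimes> monf (Suc k) a"
  unfolding monf_def by (simp add: upt_rec)

lemma monf_ge: "n \<le> k \<Longrightarrow> monf k a = \<one>"
  unfolding monf_def by simp

lemma monf_cong: "(\<And>j. k \<le> j \<Longrightarrow> a j = b j) \<Longrightarrow> monf k a = monf k b"
  unfolding monf_def
proof -
  assume h: "\<And>j. k \<le> j \<Longrightarrow> a j = b j"
  have *: "\<And>l. set l \<subseteq> {k..} \<Longrightarrow> foldr (\<lambda>i acc. x i [^] a i \<otimes> acc) l \<one> = foldr (\<lambda>i acc. x i [^] b i \<otimes> acc) l \<one>"
    subgoal for l by (induction l) (auto simp: h)
    done
  show "foldr (\<lambda>i acc. x i [^] a i \<otimes> acc) [k..<n] \<one> = foldr (\<lambda>i acc. x i [^] b i \<otimes> acc) [k..<n] \<one>"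
    by (rule *) auto
qed

lemma mon_skip: "k \<le> n \<Longrightarrow> (\<forall>j<k. a j = 0) \<Longrightarrow> monf 0 a = monf k a"
proof (induction k)
  case 0 then show ?case by simp
next
  case (Suc k)
  then have "monf 0 a = monf k a" by auto
  also have "\<dots> = monf (Suc k) a" using Suc.prems by (simp add: monf_step)
  finally show ?case .
qed

lemma x_mon: assumes "i < n" "\<forall>j<i. a j = 0"
  shows "x i \<otimes> mon A x n a = mon A x n (padd a (ee i))"
proof -
  have "mon A x n a = monf i a" using assms by (simp add: mon_monf mon_skip)
  moreover have "mon A x n (padd a (ee i)) = monf i (padd a (ee i))"
    using assms by (simp add: mon_monf mon_skip padd_def ee_def)
  moreover have "monf i (padd a (ee i)) = x i [^] Suc (a i) \<otimes> monf (Suc i) (padd a (ee i))"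
    using assms by (simp add: monf_step padd_def ee_def)
  moreover have "monf (Suc i) (padd a (ee i)) = monf (Suc i) a"
    by (rule monf_cong) (simp add: padd_def ee_def)
  moreover have "x i \<otimes> x i [^] a i = x i [^] a i \<otimes> x i"
    by (metis nat_pow_Suc nat_pow_Suc2 xc assms(1))
  ultimately show ?thesis using assms
    by (simp add: nat_pow_Suc2 xc m_assoc[symmetric] monf_step)
qed

lemma mon_zero: "mon A x n (\<lambda>_. 0) = \<one>"
  by (simp add: mon_monf mon_skip[of n] monf_ge)

lemma mon_ee: "i < n \<Longrightarrow> mon A x n (ee i) = x i"
  using x_mon[of i "\<lambda>_. 0"] by (simp add: mon_zero xc padd_def[abs_def])

end

context pbw begin

abbreviation M where "M \<equiv> mon A x n"

inductive_set spn :: "((nat \<Rightarrow> nat) \<Rightarrow> bool) \<Rightarrow> 'a set" for P where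
  spn0: "\<zero> \<in> spn P"
| spnS: "r \<in> R \<Longrightarrow> a \<in> exps n \<Longrightarrow> P a \<Longrightarrow> y \<in> spn P \<Longrightarrow> r \<otimes> M a \<oplus> y \<in> spn P"

lemma spn_carrier: "y \<in> spn P \<Longrightarrow> y \<in> carrier A"
  by (induction rule: spn.induct) (auto simp: Rc)

lemma spn_add: "y \<in> spn P \<Longrightarrow> z \<in> spn P \<Longrightarrow> y \<oplus> z \<in> spn P"
proof (induction rule: spn.induct)
  case spn0 then show ?case by (simp add: spn_carrier)
next
  case (spnS r a y)
  then have "r \<otimes> M a \<oplus> y \<oplus> z = r \<otimes> M a \<oplus> (y \<oplus> z)"
    by (simp add: a_assoc spn_carrier Rc)
  then show ?case using spnS spn.spnS by auto
qed

lemma spn_lmult: "y \<in> spn P \<Longrightarrow> r \<in> R \<Longrightarrow> r \<otimes> y \<in> spn P"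
proof (induction rule: spn.induct)
  case spn0 then show ?case by (simp add: Rc spn.spn0)
next
  case (spnS s a y)
  then have "r \<otimes> (s \<otimes> M a \<oplus> y) = (r \<otimes> s) \<otimes> M a \<oplus> r \<otimes> y"
    by (simp add: r_distr m_assoc spn_carrier Rc)
  then show ?case using spnS spn.spnS Rm by auto
qed

lemma spn_mono: "y \<in> spn P \<Longrightarrow> (\<And>a. P a \<Longrightarrow> Q a) \<Longrightarrow> y \<in> spn Q"
  by (induction rule: spn.induct) (auto intro: spn.intros)

lemma spn_single: "r \<in> R \<Longrightarrow> a \<in> exps n \<Longrightarrow> P a \<Longrightarrow> r \<otimes> M a \<in> spn P"
  using spnS[OF _ _ _ spn0, of r a P] by (simp add: Rc)

lemma spn_finsum: "finite K \<Longrightarrow> (\<And>k. k \<in> K \<Longrightarrow> f k \<in> spn P) \<Longrightarrow> finsum A f K \<in> spn P"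
proof (induction K rule: finite_induct)
  case empty then show ?case by (simp add: spn0)
next
  case (insert k K)
  have "finsum A f (insert k K) = f k \<oplus> finsum A f K"
  proof (rule finsum_insert)
    show "f \<in> K \<rightarrow> carrier A" "f k \<in> carrier A" using insert.prems spn_carrier by auto
  qed (use insert in auto)
  then show ?case using insert spn_add by auto
qed

lemma spn_rep: "y \<in> spn P \<Longrightarrow> \<exists>c S. finite S \<and> S \<subseteq> {a \<in> exps n. P a} \<and> (\<forall>a. c a \<in> R)
   \<and> (\<forall>a. a \<notin> S \<longrightarrow> c a = \<zero>) \<and> y = finsum A (\<lambda>a. c a \<otimes> M a) S"
proof (induction rule: spn.induct)
  case spn0
  show ?case by (rule exI[of _ "\<lambda>_. \<zero>"], rule exI[of _ "{}"]) (auto simp: R0)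
next
  case (spnS r a y)
  then obtain c S where cS: "finite S" "S \<subseteq> {a \<in> exps n. P a}" "\<forall>a. c a \<in> R"
    "\<forall>a. a \<notin> S \<longrightarrow> c a = \<zero>" "y = finsum A (\<lambda>a. c a \<otimes> M a) S" by blast
  define c' where "c' = c(a := r \<oplus> c a)"
  have c'R: "\<forall>b. c' b \<in> R" using cS spnS by (auto simp: c'_def Ra)
  have f1: "(\<lambda>b. c b \<otimes> M b) \<in> S \<rightarrow> carrier A" using cS by (auto simp: Rc)
  have f2: "(\<lambda>b. c' b \<otimes> M b) \<in> insert a S \<rightarrow> carrier A" using c'R by (auto simp: Rc)
  have eqS: "finsum A (\<lambda>b. c' b \<otimes> M b) (S - {a}) = finsum A (\<lambda>b. c b \<otimes> M b) (S - {a})"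
    using cS by (intro finsum_cong') (auto simp: c'_def Rc)
  have "insert a S = insert a (S - {a})" by auto
  then have "finsum A (\<lambda>b. c' b \<otimes> M b) (insert a S) = finsum A (\<lambda>b. c' b \<otimes> M b) (insert a (S - {a}))"
    by simp
  also have "\<dots> = c' a \<otimes> M a \<oplus> finsum A (\<lambda>b. c' b \<otimes> M b) (S - {a})"
    by (rule finsum_insert) (use f2 cS(1) in auto)
  also have "\<dots> = (r \<oplus> c a) \<otimes> M a \<oplus> finsum A (\<lambda>b. c b \<otimes> M b) (S - {a})"
    by (simp only: eqS) (simp add: c'_def)
  also have "\<dots> = r \<otimes> M a \<oplus> (c a \<otimes> M a \<oplus> finsum A (\<lambda>b. c b \<otimes> M b) (S - {a}))"
    using cS spnS f1 by (simp add: l_distr a_assoc Rc finsum_closed)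
  also have "c a \<otimes> M a \<oplus> finsum A (\<lambda>b. c b \<otimes> M b) (S - {a}) = y"
  proof (cases "a \<in> S")
    case True
    then have "S = insert a (S - {a})" by auto
    then have "finsum A (\<lambda>b. c b \<otimes> M b) S = finsum A (\<lambda>b. c b \<otimes> M b) (insert a (S - {a}))"
      by simp
    also have "\<dots> = c a \<otimes> M a \<oplus> finsum A (\<lambda>b. c b \<otimes> M b) (S - {a})"
      by (rule finsum_insert) (use f1 cS(1) True in auto)
    finally have "finsum A (\<lambda>b. c b \<otimes> M b) S = c a \<otimes> M a \<oplus> finsum A (\<lambda>b. c b \<otimes> M b) (S - {a})" .
    then show ?thesis using cS by simp
  next
    case False
    then show ?thesis using cS by (simp add: Rc finsum_closed f1)
  qed
  finally show ?case
    using cS spnS c'R by (intro exI[of _ c'] exI[of _ "insert a S"]) (auto simp: c'_def)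
qed

lemma minus_eq_add: "a \<in> carrier A \<Longrightarrow> b \<in> carrier A \<Longrightarrow> a = b \<oplus> (a \<ominus> b)"
  by (simp add: a_minus_def add.m_lcomm r_neg)

lemma rel_r: assumes "i < n" "r \<in> R"
  shows "\<exists>s\<in>R. \<exists>t\<in>R. x i \<otimes> r = s \<otimes> x i \<oplus> t \<and> (r \<noteq> \<zero> \<longrightarrow> s \<noteq> \<zero>)"
proof (cases "r = \<zero>")
  case True then show ?thesis using assms by (intro bexI[of _ \<zero>]) (auto simp: R0 xc)
next
  case False
  then obtain c where c: "c \<in> R" "c \<noteq> \<zero>" "x i \<otimes> r \<ominus> c \<otimes> x i \<in> R" using comm_r assms by blast
  have "x i \<otimes> r = c \<otimes> x i \<oplus> (x i \<otimes> r \<ominus> c \<otimes> x i)"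
    by (rule minus_eq_add) (use assms c in \<open>auto intro: Rc xc\<close>)
  then show ?thesis using c by blast
qed

lemma rel_x: assumes "i < n" "j < n"
  shows "\<exists>c\<in>R - {\<zero>}. \<exists>d0\<in>R. \<exists>d. (\<forall>k<n. d k \<in> R) \<and>
     x j \<otimes> x i = c \<otimes> x i \<otimes> x j \<oplus> (d0 \<oplus> finsum A (\<lambda>k. d k \<otimes> x k) {..<n})"
proof -
  obtain c where c: "c \<in> R - {\<zero>}" "lin_span A R x n (x j \<otimes> x i \<ominus> c \<otimes> x i \<otimes> x j)"
    using comm_x assms by blast
  then obtain d0 d where d: "d0 \<in> R" "\<forall>k<n. d k \<in> R"
    "x j \<otimes> x i \<ominus> c \<otimes> x i \<otimes> x j = d0 \<oplus> finsum A (\<lambda>k. d k \<otimes> x k) {..<n}"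
    unfolding lin_span_def by blast
  have "x j \<otimes> x i = c \<otimes> x i \<otimes> x j \<oplus> (x j \<otimes> x i \<ominus> c \<otimes> x i \<otimes> x j)"
    by (rule minus_eq_add) (use assms c in \<open>auto intro: Rc xc\<close>)
  then show ?thesis using c d by (metis)
qed

end

context pbw begin

abbreviation Lt where "Lt d \<equiv> spn (\<lambda>a. deg n a < d)"

lemma Lt_mono: "y \<in> Lt d \<Longrightarrow> d \<le> e \<Longrightarrow> y \<in> Lt e"
  by (erule spn_mono) simp

definition Gi :: "nat \<Rightarrow> (nat \<Rightarrow> nat) \<Rightarrow> bool" where
  "Gi i d \<longleftrightarrow> (\<exists>c\<in>R - {\<zero>}. \<exists>l\<in>Lt (Suc (deg n d)). x i \<otimes> M d = c \<otimes> M (padd d (ee i)) \<oplus> l)"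

lemma Gi_exact: assumes "i < n" "\<forall>j<i. d j = 0" shows "Gi i d"
  unfolding Gi_def using x_mon[OF assms] dom1 R1 spn0
  by (intro bexI[of _ \<one>] bexI[of _ \<zero>]) auto

lemma xr_mon: assumes "i < n" "r \<in> R" "d \<in> exps n" "Gi i d"
  shows "\<exists>c\<in>R. (r \<noteq> \<zero> \<longrightarrow> c \<noteq> \<zero>) \<and> (\<exists>l\<in>Lt (Suc (deg n d)). x i \<otimes> (r \<otimes> M d) = c \<otimes> M (padd d (ee i)) \<oplus> l)"
proof -
  obtain s t where st: "s \<in> R" "t \<in> R" "x i \<otimes> r = s \<otimes> x i \<oplus> t" "r \<noteq> \<zero> \<longrightarrow> s \<noteq> \<zero>"
    using rel_r assms by blast
  obtain c1 l1 where cl: "c1 \<in> R" "c1 \<noteq> \<zero>" "l1 \<in> Lt (Suc (deg n d))" "x i \<otimes> M d = c1 \<otimes> M (padd d (ee i)) \<oplus> l1"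
    using assms(4) unfolding Gi_def by blast
  have [simp]: "s \<in> carrier A" "t \<in> carrier A" "c1 \<in> carrier A" "r \<in> carrier A" "x i \<in> carrier A" "l1 \<in> carrier A"
    using st cl assms by (auto intro: Rc xc spn_carrier)
  have "x i \<otimes> (r \<otimes> M d) = (x i \<otimes> r) \<otimes> M d" by (simp add: m_assoc)
  also have "\<dots> = s \<otimes> (x i \<otimes> M d) \<oplus> t \<otimes> M d" by (simp add: st l_distr m_assoc)
  also have "\<dots> = (s \<otimes> c1) \<otimes> M (padd d (ee i)) \<oplus> (s \<otimes> l1 \<oplus> t \<otimes> M d)"
    by (simp add: cl r_distr m_assoc a_assoc)
  finally have eq: "x i \<otimes> (r \<otimes> M d) = (s \<otimes> c1) \<otimes> M (padd d (ee i)) \<oplus> (s \<otimes> l1 \<oplus> t \<otimes> M d)" .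
  have "s \<otimes> l1 \<oplus> t \<otimes> M d \<in> Lt (Suc (deg n d))"
    using st cl assms by (intro spn_add spn_lmult spn_single) auto
  moreover have "s \<otimes> c1 \<in> R" using st cl Rm by auto
  moreover have "r \<noteq> \<zero> \<longrightarrow> s \<otimes> c1 \<noteq> \<zero>" using st cl dom by blast
  ultimately show ?thesis using eq by blast
qed

lemma XL: assumes "\<And>d i. d \<in> exps n \<Longrightarrow> deg n d < D \<Longrightarrow> i < n \<Longrightarrow> Gi i d" "j < n"
  shows "y \<in> Lt D \<Longrightarrow> x j \<otimes> y \<in> Lt (Suc D)"
proof (induction rule: spn.induct)
  case spn0 then show ?case using assms(2) by (simp add: xc spn.spn0)
next
  case (spnS r a y)
  obtain c l where cl: "c \<in> R" "l \<in> Lt (Suc (deg n a))" "x j \<otimes> (r \<otimes> M a) = c \<otimes> M (padd a (ee j)) \<oplus> l"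
    using xr_mon[OF assms(2) spnS(1,2) assms(1)[OF spnS(2,3) assms(2)]] by blast
  have "x j \<otimes> (r \<otimes> M a \<oplus> y) = x j \<otimes> (r \<otimes> M a) \<oplus> x j \<otimes> y"
    using spnS assms(2) by (simp add: r_distr xc Rc spn_carrier)
  also have "\<dots> = c \<otimes> M (padd a (ee j)) \<oplus> l \<oplus> x j \<otimes> y" using cl by simp
  finally have eq: "x j \<otimes> (r \<otimes> M a \<oplus> y) = c \<otimes> M (padd a (ee j)) \<oplus> l \<oplus> x j \<otimes> y" .
  have "c \<otimes> M (padd a (ee j)) \<in> Lt (Suc D)"
    using cl spnS assms(2) by (intro spn_single) (auto simp: padd_exps ee_exps deg_padd deg_ee)
  moreover have "l \<in> Lt (Suc D)" using cl(2) Lt_mono spnS(3) by auto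
  ultimately show ?case using eq spnS(5) spn_add by auto
qed

lemma G_all: "d \<in> exps n \<Longrightarrow> i < n \<Longrightarrow> Gi i d"
proof (induction "deg n d" arbitrary: d i rule: less_induct)
  case less
  have IH: "\<And>d' i'. d' \<in> exps n \<Longrightarrow> deg n d' < deg n d \<Longrightarrow> i' < n \<Longrightarrow> Gi i' d'"
    using less by blast
  show ?case
  proof (cases "\<forall>j<i. d j = 0")
    case True then show ?thesis using Gi_exact less by auto
  next
    case False
    then have ex: "\<exists>j. j < i \<and> d j \<noteq> 0" by auto
    define j where "j = (LEAST j. j < i \<and> d j \<noteq> 0)"
    have j: "j < i" "d j \<noteq> 0" using LeastI_ex[OF ex] unfolding j_def by auto
    have jmin: "\<forall>l<j. d l = 0"
    proof (intro allI impI, rule ccontr)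
      fix l assume "l < j" "d l \<noteq> 0"
      moreover have "l < i" using \<open>l < j\<close> j(1) by simp
      ultimately have "j \<le> l" unfolding j_def by (intro Least_le) auto
      then show False using \<open>l < j\<close> by simp
    qed
    have jn: "j < n" using j less(3) by simp
    define b where "b = d(j := d j - 1)"
    have db: "d = padd b (ee j)" using j by (auto simp: b_def padd_def ee_def)
    have bexp: "b \<in> exps n" using less(2) jn by (auto simp: b_def exps_def)
    have bmin: "\<forall>l<j. b l = 0" using jmin by (auto simp: b_def)
    have degb: "deg n d = Suc (deg n b)" using db jn by (simp add: deg_padd deg_ee)
    have Md: "M d = x j \<otimes> M b" using x_mon[OF jn bmin] db by simp
    obtain c d0 dd where rel: "c \<in> R" "c \<noteq> \<zero>" "d0 \<in> R" "\<forall>k<n. dd k \<in> R"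
      "x i \<otimes> x j = c \<otimes> x j \<otimes> x i \<oplus> (d0 \<oplus> finsum A (\<lambda>k. dd k \<otimes> x k) {..<n})"
      using rel_x[OF jn less(3)] by blast
    have Gib: "Gi i b" using IH[OF bexp _ less(3)] degb by simp
    obtain c1 l1 where cl1: "c1 \<in> R" "c1 \<noteq> \<zero>" "l1 \<in> Lt (Suc (deg n b))"
      "x i \<otimes> M b = c1 \<otimes> M (padd b (ee i)) \<oplus> l1"
      using Gib unfolding Gi_def by blast
    define g where "g = padd b (ee i)"
    have gexp: "g \<in> exps n" using bexp less(3) by (simp add: g_def padd_exps ee_exps)
    have gmin: "\<forall>l<j. g l = 0" using bmin j by (auto simp: g_def padd_def ee_def)
    have degg: "deg n g = deg n d" using degb less(3) by (simp add: g_def deg_padd deg_ee)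
    have gj: "padd g (ee j) = padd d (ee i)" using db by (auto simp: g_def padd_def)
    obtain c2 l2 where cl2: "c2 \<in> R" "c2 \<noteq> \<zero>" "l2 \<in> Lt (Suc (deg n d))"
      "x j \<otimes> (c1 \<otimes> M g) = c2 \<otimes> M (padd d (ee i)) \<oplus> l2"
      using xr_mon[OF jn cl1(1) gexp Gi_exact[OF jn gmin]] cl1(2) degg gj by auto
    have IH2: "\<And>d' i'. d' \<in> exps n \<Longrightarrow> deg n d' < Suc (deg n b) \<Longrightarrow> i' < n \<Longrightarrow> Gi i' d'"
      using IH degb by simp
    have xl1: "x j \<otimes> l1 \<in> Lt (Suc (deg n d))"
      using XL[OF IH2 jn cl1(3)] degb by simp
    have Mb: "M b \<in> Lt (Suc (deg n b))"
      using spn_single[OF R1 bexp, of "\<lambda>a. deg n a < Suc (deg n b)"] by simp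
    define T where "T = finsum A (\<lambda>k. dd k \<otimes> (x k \<otimes> M b)) {..<n}"
    have T: "T \<in> Lt (Suc (deg n d))" unfolding T_def
    proof (rule spn_finsum)
      fix k assume "k \<in> {..<n}"
      then show "dd k \<otimes> (x k \<otimes> M b) \<in> Lt (Suc (deg n d))"
        using spn_lmult[OF XL[OF IH2 _ Mb]] rel(4) degb by auto
    qed auto
    have [simp]: "c \<in> carrier A" "d0 \<in> carrier A" "c1 \<in> carrier A" "c2 \<in> carrier A"
      "x i \<in> carrier A" "x j \<in> carrier A" "l1 \<in> carrier A" "l2 \<in> carrier A" "T \<in> carrier A"
      using rel cl1 cl2 jn less(3) T by (auto intro: Rc xc spn_carrier)
    have fc: "(\<lambda>k. dd k \<otimes> x k) \<in> {..<n} \<rightarrow> carrier A" using rel(4) by (auto intro: Rc xc)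
    have Tsum: "finsum A (\<lambda>k. dd k \<otimes> x k) {..<n} \<otimes> M b = T"
      unfolding T_def using fc rel(4)
      by (simp add: finsum_ldistr, intro finsum_cong') (auto simp: m_assoc Rc xc)
    have "x i \<otimes> M d = (x i \<otimes> x j) \<otimes> M b" by (simp add: Md m_assoc)
    also have "\<dots> = c \<otimes> (x j \<otimes> (x i \<otimes> M b)) \<oplus> (d0 \<otimes> M b \<oplus> T)"
      using fc by (simp add: rel(5) l_distr m_assoc Tsum[symmetric] finsum_closed)
    also have "x j \<otimes> (x i \<otimes> M b) = c2 \<otimes> M (padd d (ee i)) \<oplus> (l2 \<oplus> x j \<otimes> l1)"
      by (simp add: cl1(4) r_distr cl2(4)[unfolded g_def] a_assoc)
    also have "c \<otimes> (c2 \<otimes> M (padd d (ee i)) \<oplus> (l2 \<oplus> x j \<otimes> l1)) \<oplus> (d0 \<otimes> M b \<oplus> T) =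
       (c \<otimes> c2) \<otimes> M (padd d (ee i)) \<oplus> (c \<otimes> (l2 \<oplus> x j \<otimes> l1) \<oplus> (d0 \<otimes> M b \<oplus> T))"
      by (simp add: r_distr m_assoc a_assoc)
    finally have eq: "x i \<otimes> M d = (c \<otimes> c2) \<otimes> M (padd d (ee i)) \<oplus> (c \<otimes> (l2 \<oplus> x j \<otimes> l1) \<oplus> (d0 \<otimes> M b \<oplus> T))" .
    have "c \<otimes> (l2 \<oplus> x j \<otimes> l1) \<oplus> (d0 \<otimes> M b \<oplus> T) \<in> Lt (Suc (deg n d))"
    proof -
      have "c \<otimes> (l2 \<oplus> x j \<otimes> l1) \<in> Lt (Suc (deg n d))"
        by (rule spn_lmult[OF spn_add[OF cl2(3) xl1] rel(1)])
      moreover have "d0 \<otimes> M b \<in> Lt (Suc (deg n d))"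
        by (rule spn_single) (use rel bexp degb in auto)
      ultimately show ?thesis using T spn_add by blast
    qed
    moreover have "c \<otimes> c2 \<in> R - {\<zero>}" using rel cl2 dom Rm by auto
    ultimately show ?thesis unfolding Gi_def using eq by blast
  qed
qed

end

context pbw begin

abbreviation Ls where "Ls g \<equiv> spn (\<lambda>a. lessm n a g)"

lemma Lt_Ls: "y \<in> Lt (deg n g) \<Longrightarrow> y \<in> Ls g"
  by (erule spn_mono) (simp add: lessm_deg)

lemma Ls_mono: "y \<in> Ls g \<Longrightarrow> lessm n g h \<Longrightarrow> y \<in> Ls h"
  by (erule spn_mono) (rule lessm_trans)

lemma XM: assumes "j < n" "r \<in> R" "a \<in> exps n"
  shows "\<exists>c\<in>R. (r \<noteq> \<zero> \<longrightarrow> c \<noteq> \<zero>) \<and> (\<exists>l\<in>Ls (padd a (ee j)). x j \<otimes> (r \<otimes> M a) = c \<otimes> M (padd a (ee j)) \<oplus> l)"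
proof -
  obtain c l where "c \<in> R" "r \<noteq> \<zero> \<longrightarrow> c \<noteq> \<zero>" "l \<in> Lt (Suc (deg n a))"
    "x j \<otimes> (r \<otimes> M a) = c \<otimes> M (padd a (ee j)) \<oplus> l"
    using xr_mon[OF assms G_all[OF assms(3,1)]] by blast
  moreover have "l \<in> Ls (padd a (ee j))"
    using \<open>l \<in> Lt (Suc (deg n a))\<close> assms by (intro Lt_Ls) (simp add: deg_padd deg_ee)
  ultimately show ?thesis by blast
qed

lemma XLs: assumes "j < n" shows "y \<in> Ls g \<Longrightarrow> x j \<otimes> y \<in> Ls (padd g (ee j))"
proof (induction rule: spn.induct)
  case spn0 then show ?case using assms by (simp add: xc spn.spn0)
next
  case (spnS r a y)
  obtain c l where cl: "c \<in> R" "l \<in> Ls (padd a (ee j))" "x j \<otimes> (r \<otimes> M a) = c \<otimes> M (padd a (ee j)) \<oplus> l"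
    using XM[OF assms spnS(1,2)] by blast
  have "x j \<otimes> (r \<otimes> M a \<oplus> y) = x j \<otimes> (r \<otimes> M a) \<oplus> x j \<otimes> y"
    using spnS assms by (simp add: r_distr xc Rc spn_carrier)
  also have "\<dots> = c \<otimes> M (padd a (ee j)) \<oplus> l \<oplus> x j \<otimes> y" using cl by simp
  finally have eq: "x j \<otimes> (r \<otimes> M a \<oplus> y) = c \<otimes> M (padd a (ee j)) \<oplus> l \<oplus> x j \<otimes> y" .
  have lt: "lessm n (padd a (ee j)) (padd g (ee j))" using spnS(3) by (rule lessm_padd)
  have "c \<otimes> M (padd a (ee j)) \<in> Ls (padd g (ee j))"
    using cl spnS assms lt by (intro spn_single) (auto simp: padd_exps ee_exps)
  moreover have "l \<in> Ls (padd g (ee j))" using cl(2) Ls_mono lt by auto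
  ultimately show ?case using eq spnS(5) spn_add by auto
qed

lemma decomp: assumes "a \<in> exps n" "a \<noteq> (\<lambda>_. 0)"
  shows "\<exists>j b. j < n \<and> b \<in> exps n \<and> a = padd b (ee j) \<and> M a = x j \<otimes> M b"
proof -
  have ex: "\<exists>j. a j \<noteq> 0" using assms by auto
  define j where "j = (LEAST j. a j \<noteq> 0)"
  have j: "a j \<noteq> 0" using LeastI_ex[OF ex] unfolding j_def by auto
  have jmin: "\<forall>l<j. a l = 0"
  proof (intro allI impI)
    fix l assume "l < j"
    then show "a l = 0" using not_less_Least[of l "\<lambda>j. a j \<noteq> 0"] unfolding j_def by blast
  qed
  have jn: "j < n"
  proof (rule ccontr)
    assume "\<not> j < n" then have "a j = 0" using assms(1) by (simp add: exps_def)
    then show False using j by simp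
  qed
  define b where "b = a(j := a j - 1)"
  have db: "a = padd b (ee j)" using j by (auto simp: b_def padd_def ee_def)
  have bexp: "b \<in> exps n" using assms(1) jn by (auto simp: b_def exps_def)
  have bmin: "\<forall>l<j. b l = 0" using jmin by (auto simp: b_def)
  have "M a = x j \<otimes> M b" using x_mon[OF jn bmin] db by simp
  then show ?thesis using jn bexp db by blast
qed

lemma exps_zero: "(\<lambda>_. 0) \<in> exps n" by (simp add: exps_def)

lemma MM: "a \<in> exps n \<Longrightarrow> b \<in> exps n \<Longrightarrow> r \<in> R \<Longrightarrow>
  (\<exists>c\<in>R. (r \<noteq> \<zero> \<longrightarrow> c \<noteq> \<zero>) \<and> (\<exists>l\<in>Ls (padd a b). M a \<otimes> (r \<otimes> M b) = c \<otimes> M (padd a b) \<oplus> l))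
  \<and> (\<forall>y\<in>Ls b. M a \<otimes> y \<in> Ls (padd a b))"
proof (induction "deg n a" arbitrary: a rule: less_induct)
  case less
  show ?case
  proof (cases "a = (\<lambda>_. 0)")
    case True
    then have "M a = \<one>" using mon_zero by simp
    moreover have "padd a b = b" using True by (simp add: padd_def)
    have e1: "M a \<otimes> (r \<otimes> M b) = r \<otimes> M (padd a b) \<oplus> \<zero>"
      using less(4) Rc \<open>M a = \<one>\<close> \<open>padd a b = b\<close> by simp
    have e2: "\<forall>y\<in>Ls b. M a \<otimes> y \<in> Ls (padd a b)"
      using \<open>M a = \<one>\<close> \<open>padd a b = b\<close> by (simp add: spn_carrier)
    show ?thesis using e1 e2 less(4) spn0 by blast
  next
    case False
    then obtain j a' where ja: "j < n" "a' \<in> exps n" "a = padd a' (ee j)" "M a = x j \<otimes> M a'"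
      using decomp less(2) by blast
    have dlt: "deg n a' < deg n a" using ja by (simp add: deg_padd deg_ee)
    have IH: "(\<exists>c\<in>R. (r \<noteq> \<zero> \<longrightarrow> c \<noteq> \<zero>) \<and> (\<exists>l\<in>Ls (padd a' b). M a' \<otimes> (r \<otimes> M b) = c \<otimes> M (padd a' b) \<oplus> l))
      \<and> (\<forall>y\<in>Ls b. M a' \<otimes> y \<in> Ls (padd a' b))"
      using less(1)[OF dlt ja(2) less(3,4)] .
    have pab: "padd a b = padd (padd a' b) (ee j)" using ja(3) by (auto simp: padd_def)
    have part2: "\<forall>y\<in>Ls b. M a \<otimes> y \<in> Ls (padd a b)"
    proof
      fix y assume y: "y \<in> Ls b"
      have "M a \<otimes> y = x j \<otimes> (M a' \<otimes> y)" using ja y by (simp add: m_assoc xc spn_carrier)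
      then show "M a \<otimes> y \<in> Ls (padd a b)" using XLs[OF ja(1)] IH y pab by auto
    qed
    obtain c l where cl: "c \<in> R" "r \<noteq> \<zero> \<longrightarrow> c \<noteq> \<zero>" "l \<in> Ls (padd a' b)"
      "M a' \<otimes> (r \<otimes> M b) = c \<otimes> M (padd a' b) \<oplus> l" using IH by blast
    obtain c' l' where cl': "c' \<in> R" "c \<noteq> \<zero> \<longrightarrow> c' \<noteq> \<zero>" "l' \<in> Ls (padd a b)"
      "x j \<otimes> (c \<otimes> M (padd a' b)) = c' \<otimes> M (padd a b) \<oplus> l'"
      using XM[OF ja(1) cl(1) padd_exps[OF ja(2) less(3)]] pab by auto
    have xl: "x j \<otimes> l \<in> Ls (padd a b)" using XLs[OF ja(1) cl(3)] pab by simp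
    have "M a \<otimes> (r \<otimes> M b) = x j \<otimes> (M a' \<otimes> (r \<otimes> M b))"
      using ja less(3,4) by (simp add: m_assoc xc Rc)
    also have "\<dots> = c' \<otimes> M (padd a b) \<oplus> (l' \<oplus> x j \<otimes> l)"
      using cl cl' ja by (simp add: r_distr xc Rc spn_carrier a_assoc)
    finally have "M a \<otimes> (r \<otimes> M b) = c' \<otimes> M (padd a b) \<oplus> (l' \<oplus> x j \<otimes> l)" .
    moreover have "l' \<oplus> x j \<otimes> l \<in> Ls (padd a b)" using cl'(3) xl by (rule spn_add)
    ultimately show ?thesis using part2 cl cl' by blast
  qed
qed

end

context pbw begin

lemma prod_lead:
  assumes a: "a \<in> R" "a \<noteq> \<zero>" "al \<in> exps n" "f' \<in> Ls al"
    and b: "b \<in> R" "b \<noteq> \<zero>" "be \<in> exps n" "g' \<in> Ls be"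
  shows "\<exists>c\<in>R - {\<zero>}. \<exists>l\<in>Ls (padd al be). (a \<otimes> M al \<oplus> f') \<otimes> (b \<otimes> M be \<oplus> g') = c \<otimes> M (padd al be) \<oplus> l"
proof -
  define g where "g = b \<otimes> M be \<oplus> g'"
  have gc: "g \<in> carrier A" using b by (simp add: g_def Rc spn_carrier)
  have Mg: "\<exists>c\<in>R - {\<zero>}. \<exists>l\<in>Ls (padd d be). M d \<otimes> g = c \<otimes> M (padd d be) \<oplus> l" if dexp: "d \<in> exps n" for d
  proof -
    obtain c l where cl: "c \<in> R" "c \<noteq> \<zero>" "l \<in> Ls (padd d be)" "M d \<otimes> (b \<otimes> M be) = c \<otimes> M (padd d be) \<oplus> l"
      and MLp: "\<forall>y\<in>Ls be. M d \<otimes> y \<in> Ls (padd d be)"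
      using MM[OF dexp b(3) b(1)] b(2) by blast
    have "M d \<otimes> g = M d \<otimes> (b \<otimes> M be) \<oplus> M d \<otimes> g'"
      using b by (simp add: g_def r_distr Rc spn_carrier)
    also have "\<dots> = c \<otimes> M (padd d be) \<oplus> (l \<oplus> M d \<otimes> g')"
      using cl b by (simp add: a_assoc Rc spn_carrier)
    finally show ?thesis using cl MLp b(4) spn_add by blast
  qed
  have fg': "y \<otimes> g \<in> Ls (padd al be)" if yl: "y \<in> Ls al" for y
    using yl
  proof (induction rule: spn.induct)
    case spn0 then show ?case using gc by (simp add: spn.spn0)
  next
    case (spnS r d y)
    obtain c l where cl: "c \<in> R" "l \<in> Ls (padd d be)" "M d \<otimes> g = c \<otimes> M (padd d be) \<oplus> l"
      using Mg[OF spnS(2)] by blast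
    have lt: "lessm n (padd d be) (padd al be)" using spnS(3) by (rule lessm_padd)
    have "M d \<otimes> g \<in> Ls (padd al be)"
      unfolding cl(3) using cl lt spnS(2) b(3)
      by (intro spn_add spn_single) (auto simp: padd_exps intro: Ls_mono)
    then have "r \<otimes> (M d \<otimes> g) \<in> Ls (padd al be)" using spnS(1) by (rule spn_lmult)
    moreover have "(r \<otimes> M d \<oplus> y) \<otimes> g = r \<otimes> (M d \<otimes> g) \<oplus> y \<otimes> g"
      using spnS gc by (simp add: l_distr m_assoc Rc spn_carrier)
    ultimately show ?case using spnS(5) spn_add by auto
  qed
  obtain c l where cl: "c \<in> R" "c \<noteq> \<zero>" "l \<in> Ls (padd al be)" "M al \<otimes> g = c \<otimes> M (padd al be) \<oplus> l"
    using Mg[OF a(3)] by blast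
  have "(a \<otimes> M al \<oplus> f') \<otimes> g = a \<otimes> (M al \<otimes> g) \<oplus> f' \<otimes> g"
    using a gc by (simp add: l_distr m_assoc Rc spn_carrier)
  also have "\<dots> = (a \<otimes> c) \<otimes> M (padd al be) \<oplus> (a \<otimes> l \<oplus> f' \<otimes> g)"
    using a gc cl by (simp add: r_distr m_assoc a_assoc Rc spn_carrier)
  finally have eq: "(a \<otimes> M al \<oplus> f') \<otimes> g = (a \<otimes> c) \<otimes> M (padd al be) \<oplus> (a \<otimes> l \<oplus> f' \<otimes> g)" .
  have "a \<otimes> l \<oplus> f' \<otimes> g \<in> Ls (padd al be)"
    using spn_lmult[OF cl(3) a(1)] fg'[OF a(4)] by (rule spn_add)
  moreover have "a \<otimes> c \<in> R - {\<zero>}" using a cl dom Rm by auto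
  ultimately show ?thesis using eq unfolding g_def by blast
qed

lemma lead_decomp: assumes "f \<in> carrier A" "f \<noteq> \<zero>"
  shows "\<exists>a al f'. a \<in> R \<and> a \<noteq> \<zero> \<and> al \<in> exps n \<and> f' \<in> Ls al \<and> f = a \<otimes> M al \<oplus> f'"
proof -
  obtain c where c: "\<forall>a. c a \<in> R" "\<forall>a. a \<notin> exps n \<longrightarrow> c a = \<zero>" "finite {a. c a \<noteq> \<zero>}"
    "f = finsum A (\<lambda>a. c a \<otimes> M a) {a. c a \<noteq> \<zero>}"
    using free assms(1) unfolding free_left_basis_def by blast
  define S where "S = {a. c a \<noteq> \<zero>}"
  have c4: "f = finsum A (\<lambda>a. c a \<otimes> M a) S" using c(4) by (simp add: S_def)
  have S1: "finite S" using c(3) by (simp add: S_def)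
  have S2: "S \<noteq> {}"
  proof
    assume "S = {}" then have "f = \<zero>" using c4 by simp
    then show False using assms(2) by simp
  qed
  note S = S1 S2
  obtain al where al: "al \<in> S" "\<forall>s\<in>S. s \<noteq> al \<longrightarrow> lessm n s al" using max_exists[OF S] by blast
  have f1: "(\<lambda>b. c b \<otimes> M b) \<in> S \<rightarrow> carrier A" using c by (auto simp: Rc)
  have "S = insert al (S - {al})" using al by auto
  then have "finsum A (\<lambda>b. c b \<otimes> M b) S = finsum A (\<lambda>b. c b \<otimes> M b) (insert al (S - {al}))"
    by simp
  also have "\<dots> = c al \<otimes> M al \<oplus> finsum A (\<lambda>b. c b \<otimes> M b) (S - {al})"
    by (rule finsum_insert) (use f1 S al in auto)
  finally have eq: "f = c al \<otimes> M al \<oplus> finsum A (\<lambda>b. c b \<otimes> M b) (S - {al})"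
    using c4 by simp
  have "finsum A (\<lambda>b. c b \<otimes> M b) (S - {al}) \<in> Ls al"
  proof (rule spn_finsum)
    fix s assume s: "s \<in> S - {al}"
    then have "s \<in> exps n" using c(2) by (auto simp: S_def)
    then show "c s \<otimes> M s \<in> Ls al" using s al c(1) by (intro spn_single) auto
  qed (use S in auto)
  moreover have "al \<in> exps n" "c al \<noteq> \<zero>" using al c(2) by (auto simp: S_def)
  ultimately show ?thesis using eq c(1) by blast
qed

lemma lead_nonzero: assumes "c \<in> R" "c \<noteq> \<zero>" "g \<in> exps n" "l \<in> Ls g"
  shows "c \<otimes> M g \<oplus> l \<noteq> \<zero>"
proof
  assume z: "c \<otimes> M g \<oplus> l = \<zero>"
  obtain cl S where S: "finite S" "S \<subseteq> {a \<in> exps n. lessm n a g}" "\<forall>a. cl a \<in> R"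
    "\<forall>a. a \<notin> S \<longrightarrow> cl a = \<zero>" "l = finsum A (\<lambda>a. cl a \<otimes> M a) S"
    using spn_rep[OF assms(4)] by blast
  have gS: "g \<notin> S" using S(2) lessm_irrefl by auto
  define c' where "c' = cl(g := c)"
  have c'R: "\<forall>a. c' a \<in> R" using S assms by (auto simp: c'_def)
  have f1: "(\<lambda>b. c' b \<otimes> M b) \<in> insert g S \<rightarrow> carrier A" using c'R by (auto simp: Rc)
  have "finsum A (\<lambda>b. c' b \<otimes> M b) (insert g S) = c' g \<otimes> M g \<oplus> finsum A (\<lambda>b. c' b \<otimes> M b) S"
    by (rule finsum_insert) (use f1 S gS in auto)
  also have "finsum A (\<lambda>b. c' b \<otimes> M b) S = l"
    unfolding S(5) using S gS by (intro finsum_cong') (auto simp: c'_def Rc)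
  finally have e1: "finsum A (\<lambda>b. c' b \<otimes> M b) (insert g S) = \<zero>" using z by (simp add: c'_def)
  have supp: "{a. c' a \<noteq> \<zero>} \<subseteq> insert g S" using S by (auto simp: c'_def)
  have e2: "finsum A (\<lambda>b. c' b \<otimes> M b) (insert g S) = finsum A (\<lambda>b. c' b \<otimes> M b) {a. c' a \<noteq> \<zero>}"
    by (rule add.finprod_mono_neutral_cong_right) (use S supp f1 in \<open>auto\<close>)
  define Q where "Q = (\<lambda>c :: (nat \<Rightarrow> nat) \<Rightarrow> 'a. (\<forall>a. c a \<in> R) \<and> (\<forall>a. a \<notin> exps n \<longrightarrow> c a = \<zero>) \<and>
        finite {a. c a \<noteq> \<zero>} \<and> \<zero> = finsum A (\<lambda>a. c a \<otimes> M a) {a. c a \<noteq> \<zero>})"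
  have ex1: "\<exists>!c. Q c" unfolding Q_def
    by (rule bspec[OF free[unfolded free_left_basis_def] zero_closed])
  have o1: "\<forall>a. a \<notin> exps n \<longrightarrow> c' a = \<zero>"
  proof (intro allI impI)
    fix a assume "a \<notin> exps n"
    then have "a \<noteq> g" "a \<notin> S" using assms(3) S(2) by auto
    then show "c' a = \<zero>" using S(4) by (simp add: c'_def)
  qed
  have fin: "finite {a. c' a \<noteq> \<zero>}" using supp S(1) by (rule finite_subset[OF _ finite_insert[THEN iffD2]])
  have P1: "Q c'" unfolding Q_def using c'R o1 fin e1 e2 by simp
  have P2: "Q (\<lambda>_. \<zero>)" unfolding Q_def using R0 by simp
  have "c' = (\<lambda>_. \<zero>)" using the1_equality[of Q c', OF ex1 P1] the1_equality[of Q "\<lambda>_. \<zero>", OF ex1 P2] by simp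
  then show False using assms(2) by (metis c'_def fun_upd_same)
qed

lemma domainA: assumes "f \<in> carrier A" "f \<noteq> \<zero>" "g \<in> carrier A" "g \<noteq> \<zero>"
  shows "f \<otimes> g \<noteq> \<zero>"
proof -
  obtain a al f' where f: "a \<in> R" "a \<noteq> \<zero>" "al \<in> exps n" "f' \<in> Ls al" "f = a \<otimes> M al \<oplus> f'"
    using lead_decomp[OF assms(1,2)] by blast
  obtain b be g' where g: "b \<in> R" "b \<noteq> \<zero>" "be \<in> exps n" "g' \<in> Ls be" "g = b \<otimes> M be \<oplus> g'"
    using lead_decomp[OF assms(3,4)] by blast
  obtain c l where "c \<in> R - {\<zero>}" "l \<in> Ls (padd al be)" "f \<otimes> g = c \<otimes> M (padd al be) \<oplus> l"
    using prod_lead[OF f(1-4) g(1-4)] f(5) g(5) by blast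
  then show ?thesis using lead_nonzero padd_exps[OF f(3) g(3)] by auto
qed

lemma x0_nonzero: assumes "0 < n" "z \<in> R" shows "x 0 \<ominus> z \<noteq> \<zero>"
proof -
  have "x 0 \<ominus> z = \<one> \<otimes> M (ee 0) \<oplus> (\<ominus> z) \<otimes> M (\<lambda>_. 0)"
    using assms by (simp add: mon_ee mon_zero a_minus_def xc Rc)
  moreover have "(\<ominus> z) \<otimes> M (\<lambda>_. 0) \<in> Ls (ee 0)"
    using assms by (intro spn_single) (auto simp: Rn exps_zero lessm_def deg_def ee_def)
  ultimately show ?thesis using lead_nonzero[OF R1 dom1 ee_exps[OF assms(1)]] by simp
qed

end

context pbw begin

lemma gens_carrier: assumes "Z \<in> points R n"
  shows "{x i \<ominus> Z ! i | i. i < n} \<subseteq> carrier A"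
proof -
  have "Z ! i \<in> R" if "i < n" for i using assms that by (auto simp: points_def)
  then show ?thesis by (force intro: minus_closed[OF xc Rc])
qed

lemma pideal: "Z \<in> points R n \<Longrightarrow> ideal (point_ideal A x n Z) A"
  unfolding point_ideal_def by (rule genideal_ideal[OF gens_carrier])

lemma vmul: assumes "g \<in> carrier A" "h \<in> carrier A"
  shows "vanishing A R x n g \<subseteq> vanishing A R x n (g \<otimes> h)"
    "vanishing A R x n h \<subseteq> vanishing A R x n (g \<otimes> h)"
  using assms ideal.I_r_closed[OF pideal] ideal.I_l_closed[OF pideal]
  unfolding vanishing_def by auto

lemma alg_union: assumes "algebraic_set A R x n S" "algebraic_set A R x n T"
  shows "algebraic_set A R x n (S \<union> T)"
proof -
  have sub: "S \<subseteq> points R n" "T \<subseteq> points R n" using assms by (auto simp: algebraic_set_def)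
  show ?thesis
  proof (cases "S = points R n \<or> T = points R n")
    case True then show ?thesis using sub by (auto simp: algebraic_set_def)
  next
    case False
    then obtain g h where g: "g \<in> carrier A" "g \<noteq> \<zero>" "S \<subseteq> vanishing A R x n g"
      and h: "h \<in> carrier A" "h \<noteq> \<zero>" "T \<subseteq> vanishing A R x n h"
      using assms unfolding algebraic_set_def by blast
    have "S \<union> T \<subseteq> vanishing A R x n (g \<otimes> h)" using vmul[OF g(1) h(1)] g h by blast
    moreover have "g \<otimes> h \<noteq> \<zero>" using domainA g h by blast
    ultimately show ?thesis using sub g h unfolding algebraic_set_def by blast
  qed
qed

lemma alg_single: assumes "Z \<in> points R n" shows "algebraic_set A R x n {Z}"
proof (cases "n = 0")
  case True
  then have "points R n = {Z}" using assms by (auto simp: points_def)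
  then show ?thesis by (simp add: algebraic_set_def)
next
  case False
  then have n0: "0 < n" by simp
  have z: "Z ! 0 \<in> R" using assms n0 by (auto simp: points_def)
  have "x 0 \<ominus> Z ! 0 \<in> point_ideal A x n Z"
    unfolding point_ideal_def using genideal_self[OF gens_carrier[OF assms]] n0 by blast
  then have "{Z} \<subseteq> vanishing A R x n (x 0 \<ominus> Z ! 0)" using assms by (simp add: vanishing_def)
  moreover have "x 0 \<ominus> Z ! 0 \<in> carrier A" using n0 z by (simp add: xc Rc)
  ultimately show ?thesis using x0_nonzero[OF n0 z] assms unfolding algebraic_set_def by blast
qed

lemma alg_finite: "finite S \<Longrightarrow> S \<subseteq> points R n \<Longrightarrow> algebraic_set A R x n S"
proof (induction S rule: finite_induct)
  case empty
  then show ?case using dom1 unfolding algebraic_set_def by blast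
next
  case (insert Z S)
  then have "algebraic_set A R x n ({Z} \<union> S)"
    using alg_union[OF alg_single] by simp
  then show ?case by simp
qed

lemma alg_inter: assumes "\<forall>S\<in>F. algebraic_set A R x n S"
  shows "algebraic_set A R x n (points R n \<inter> \<Inter>F)"
proof (cases "\<exists>S\<in>F. S \<noteq> points R n")
  case True
  then obtain S where S: "S \<in> F" "S \<noteq> points R n" by blast
  then obtain g where "g \<in> carrier A" "g \<noteq> \<zero>" "S \<subseteq> vanishing A R x n g"
    using assms unfolding algebraic_set_def by blast
  moreover have "points R n \<inter> \<Inter>F \<subseteq> S" using S by blast
  ultimately show ?thesis unfolding algebraic_set_def by blast
next
  case False
  then have "points R n \<inter> \<Inter>F = points R n" by blast
  then show ?thesis by (simp add: algebraic_set_def)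
qed

end

lemma pbw_from:
  assumes "subring_domain A R" "bijective_skew_PBW A R x n"
  shows "pbw A R x n"
proof -
  have s: "skew_PBW A R x n" using assms(2) by (simp add: bijective_skew_PBW_def)
  then have r: "ring A" by (simp add: skew_PBW_def)
  show ?thesis
  proof (intro pbw.intro[OF r] pbw_axioms.intro)
    show "subring R A" using s by (simp add: skew_PBW_def)
    show "\<And>i. i < n \<Longrightarrow> x i \<in> carrier A" using s by (simp add: skew_PBW_def)
    show "free_left_basis A R x n" using s by (simp add: skew_PBW_def)
    show "\<And>i r. i < n \<Longrightarrow> r \<in> R \<Longrightarrow> r \<noteq> \<zero>\<^bsub>A\<^esub> \<Longrightarrow> \<exists>c\<in>R - {\<zero>\<^bsub>A\<^esub>}. x i \<otimes>\<^bsub>A\<^esub> r \<ominus>\<^bsub>A\<^esub> c \<otimes>\<^bsub>A\<^esub> x i \<in> R"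
      using s unfolding skew_PBW_def by blast
    show "\<And>i j. i < n \<Longrightarrow> j < n \<Longrightarrow> \<exists>c\<in>R - {\<zero>\<^bsub>A\<^esub>}. lin_span A R x n (x j \<otimes>\<^bsub>A\<^esub> x i \<ominus>\<^bsub>A\<^esub> c \<otimes>\<^bsub>A\<^esub> x i \<otimes>\<^bsub>A\<^esub> x j)"
      using s unfolding skew_PBW_def by blast
    show "\<one>\<^bsub>A\<^esub> \<noteq> \<zero>\<^bsub>A\<^esub>" using assms(1) by (simp add: subring_domain_def)
    show "\<And>a b. a \<in> R \<Longrightarrow> b \<in> R \<Longrightarrow> a \<otimes>\<^bsub>A\<^esub> b = \<zero>\<^bsub>A\<^esub> \<Longrightarrow> a = \<zero>\<^bsub>A\<^esub> \<or> b = \<zero>\<^bsub>A\<^esub>"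
      using assms(1) by (simp add: subring_domain_def)
  qed
qed

theorem corollary4p5:
  fixes A :: "('a, 'b) ring_scheme" and R :: "'a set" and x :: "nat \<Rightarrow> 'a" and n :: nat
  assumes "left_noetherian_sub A R" and "subring_domain A R"
    and "bijective_skew_PBW A R x n"
  shows "(algebraic_set A R x n {} \<and>
          algebraic_set A R x n (points R n) \<and>
          (\<forall>S T. algebraic_set A R x n S \<and> algebraic_set A R x n T \<longrightarrow>
                 algebraic_set A R x n (S \<union> T)) \<and>
          (\<forall>F. (\<forall>S \<in> F. algebraic_set A R x n S) \<longrightarrow>
                 algebraic_set A R x n (points R n \<inter> \<Inter>F)))
       \<and> (\<forall>S. finite S \<and> S \<subseteq> points R n \<longrightarrow> algebraic_set A R x n S)"
proof -
  interpret P: pbw A R x n using pbw_from[OF assms(2,3)] .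
  show ?thesis
    using P.alg_finite[of "{}"] P.alg_union P.alg_inter P.alg_finite
    by (auto simp: algebraic_set_def)
qed

end
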